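(* Let $\alpha$ be a Riemannian metric and $\beta$ a 1-form on a manifold, and let $k_1,k_2,k_3$ be constants with $1+(k_1+k_3)t+k_2t^2>0$ for $0\le t\le b^2$. Suppose $$b_{i|j}=2\tau\{(1+k_1b^2)a_{ij}+(k_2b^2+k_3)b_ib_j\}$$ for a scalar function $\tau$. Let $c=c(b^2)=\exp\big(\int_0^{b^2}\frac12\frac{k_3+k_2t}{1+(k_1+k_3)t+k_2t^2}dt\big)$ and $\tilde\beta=\beta/c$. Then the covariant derivative of $\tilde\beta$ with respect to $\alpha$ satisfies $$\tilde b_{i|j}=\frac{2\tau(1+k_1b^2)}{c}\,a_{ij};$$ in particular $\tilde\beta$ is closed and conformal with respect to $\alpha$.
   Context: For $\alpha=\sqrt{a_{ij}y^iy^j}$ and $\beta=b_iy^i$: $b=\|\beta\|_\alpha=\sqrt{a^{ij}b_ib_j}$, and $b_{i|j}$ denotes the covariant derivative of $\beta$ with respect to the Levi-Civita connection of $\alpha$. A 1-form is closed if its covariant derivative is symmetric. *)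

theory Defs
  imports "HOL-Analysis.Analysis"
begin

text \<open>Local-coordinate setting: an open coordinate domain U in R^n (index type 'n).\<close>

definition partial :: "(real^'n \<Rightarrow> real) \<Rightarrow> 'n \<Rightarrow> real^'n \<Rightarrow> real" where
  "partial f j x = frechet_derivative f (at x) (axis j 1)"

definition riemannian_metric_on :: "(real^'n) set \<Rightarrow> (real^'n \<Rightarrow> real^'n^'n) \<Rightarrow> bool" where
  "riemannian_metric_on U A \<longleftrightarrow> open U \<and> (\<forall>x\<in>U.
      (\<forall>i j. A x $ i $ j = A x $ j $ i) \<and>
      (\<forall>v. v \<noteq> 0 \<longrightarrow> v \<bullet> (A x *v v) > 0) \<and>
      (\<forall>i j. (\<lambda>y. A y $ i $ j) differentiable (at x)))"

definition one_form_on :: "(real^'n) set \<Rightarrow> (real^'n \<Rightarrow> real^'n) \<Rightarrow> bool" where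
  "one_form_on U b \<longleftrightarrow> (\<forall>x\<in>U. \<forall>i. (\<lambda>y. b y $ i) differentiable (at x))"

definition christoffel :: "(real^'n \<Rightarrow> real^'n^'n) \<Rightarrow> real^'n \<Rightarrow> 'n \<Rightarrow> 'n \<Rightarrow> 'n \<Rightarrow> real" where
  "christoffel A x k i j =
     (\<Sum>l\<in>UNIV. matrix_inv (A x) $ k $ l *
        (partial (\<lambda>y. A y $ j $ l) i x + partial (\<lambda>y. A y $ i $ l) j x
         - partial (\<lambda>y. A y $ i $ j) l x)) / 2"

definition covd :: "(real^'n \<Rightarrow> real^'n^'n) \<Rightarrow> (real^'n \<Rightarrow> real^'n) \<Rightarrow> real^'n \<Rightarrow> 'n \<Rightarrow> 'n \<Rightarrow> real" where
  "covd A b x i j = partial (\<lambda>y. b y $ i) j x - (\<Sum>k\<in>UNIV. christoffel A x k i j * b x $ k)"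

definition bsq :: "(real^'n \<Rightarrow> real^'n^'n) \<Rightarrow> (real^'n \<Rightarrow> real^'n) \<Rightarrow> real^'n \<Rightarrow> real" where
  "bsq A b x = (\<Sum>i\<in>UNIV. \<Sum>j\<in>UNIV. matrix_inv (A x) $ i $ j * b x $ i * b x $ j)"

end

theory Submission
  imports Defs
begin



lemma posdef_inv:
  fixes M :: "real^'n^'n"
  assumes "\<forall>v. v \<noteq> 0 \<longrightarrow> v \<bullet> (M *v v) > 0"
  shows "invertible M" "M ** matrix_inv M = mat 1" "matrix_inv M ** M = mat 1"
proof -
  have "\<forall>v. M *v v = 0 \<longrightarrow> v = 0" using assms by force
  then have "\<exists>B. B ** M = mat 1" by (simp add: matrix_left_invertible_ker)
  then show inv: "invertible M" by (simp add: invertible_left_inverse)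
  then have "\<exists>A'. M ** A' = mat 1 \<and> A' ** M = mat 1" by (simp add: invertible_def)
  then have "M ** matrix_inv M = mat 1 \<and> matrix_inv M ** M = mat 1"
    unfolding matrix_inv_def by (rule someI_ex)
  then show "M ** matrix_inv M = mat 1" "matrix_inv M ** M = mat 1" by auto
qed

lemma differentiable_prod':
  fixes f :: "'i \<Rightarrow> 'a::real_normed_vector \<Rightarrow> real"
  assumes "finite I" "\<And>i. i \<in> I \<Longrightarrow> f i differentiable (at x)"
  shows "(\<lambda>y. \<Prod>i\<in>I. f i y) differentiable (at x)"
proof -
  from assms(2) have "\<forall>i\<in>I. \<exists>D. (f i has_derivative D) (at x)" by (auto simp: differentiable_def)
  then obtain D where "\<forall>i\<in>I. (f i has_derivative D i) (at x)" by metis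
  then show ?thesis unfolding differentiable_def by (auto intro!: has_derivative_prod)
qed

lemma det_differentiable:
  fixes M :: "real^'m \<Rightarrow> real^'n^'n"
  assumes "\<And>i j. (\<lambda>y. M y $ i $ j) differentiable (at x)"
  shows "(\<lambda>y. det (M y)) differentiable (at x)"
  unfolding det_def
  by (intro differentiable_sum ballI differentiable_mult differentiable_const differentiable_prod' assms) auto

lemma mat_axis: "((N::real^'n^'n) *v axis l 1) $ k = N $ k $ l"
  by (simp add: matrix_vector_mult_def axis_def if_distrib cong: if_cong)

lemma inv_cramer:
  fixes M :: "real^'n^'n"
  assumes "invertible M"
  shows "matrix_inv M $ k $ l = det (\<chi> i j. if j = k then axis l 1 $ i else M$i$j) / det M"
proof -
  have d: "det M \<noteq> 0" using assms invertible_det_nz by blast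
  have "M ** matrix_inv M = mat 1"
    using assms unfolding invertible_def matrix_inv_def by (rule someI2_ex) auto
  then have "M *v (matrix_inv M *v axis l 1) = axis l 1"
    by (simp add: matrix_vector_mul_assoc)
  then have "matrix_inv M *v axis l 1 = (\<chi> k. det(\<chi> i j. if j=k then axis l 1 $i else M$i$j) / det M)"
    using cramer[OF d] by blast
  then have "(matrix_inv M *v axis l 1) $ k = det (\<chi> i j. if j = k then axis l 1 $ i else M$i$j) / det M" by simp
  then show ?thesis by (simp add: mat_axis)
qed



lemma swap4:
  "(\<Sum>i\<in>I. \<Sum>l\<in>L. \<Sum>p\<in>P. \<Sum>q\<in>Q. F i l p q) = (\<Sum>p\<in>P. \<Sum>q\<in>Q. \<Sum>i\<in>I. \<Sum>l\<in>L. F i l p q)"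
proof -
  have "(\<Sum>i\<in>I. \<Sum>l\<in>L. \<Sum>p\<in>P. \<Sum>q\<in>Q. F i l p q) = (\<Sum>i\<in>I. \<Sum>p\<in>P. \<Sum>l\<in>L. \<Sum>q\<in>Q. F i l p q)"
    by (rule sum.cong[OF refl], rule sum.swap)
  also have "\<dots> = (\<Sum>i\<in>I. \<Sum>p\<in>P. \<Sum>q\<in>Q. \<Sum>l\<in>L. F i l p q)"
    by (rule sum.cong[OF refl], rule sum.cong[OF refl], rule sum.swap)
  also have "\<dots> = (\<Sum>p\<in>P. \<Sum>i\<in>I. \<Sum>q\<in>Q. \<Sum>l\<in>L. F i l p q)"
    by (rule sum.swap)
  also have "\<dots> = (\<Sum>p\<in>P. \<Sum>q\<in>Q. \<Sum>i\<in>I. \<Sum>l\<in>L. F i l p q)"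
    by (rule sum.cong[OF refl], rule sum.swap)
  finally show ?thesis .
qed

lemma alg_core:
  fixes B :: "'n::finite \<Rightarrow> 'n \<Rightarrow> real" and dA dB :: "'n \<Rightarrow> 'n \<Rightarrow> 'n \<Rightarrow> real"
    and bv :: "'n \<Rightarrow> real" and P :: "'n \<Rightarrow> 'n \<Rightarrow> real"
  assumes Bs: "\<And>i l. B i l = B l i"
    and dAs: "\<And>p q k. dA p q k = dA q p k"
    and dBf: "\<And>i l. dB i l j = - (\<Sum>p\<in>UNIV. \<Sum>q\<in>UNIV. B i p * dA p q j * B q l)"
  defines "v \<equiv> \<lambda>k. \<Sum>i\<in>UNIV. B k i * bv i"
  shows "(\<Sum>i\<in>UNIV. \<Sum>l\<in>UNIV. B i l * bv i * P l j + (B i l * P i j + dB i l j * bv i) * bv l)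
     = 2 * (\<Sum>k\<in>UNIV. v k * (P k j - (\<Sum>m\<in>UNIV.
            ((\<Sum>l\<in>UNIV. B m l * (dA j l k + dA k l j - dA k j l)) / 2) * bv m)))"
proof -
  have T1: "(\<Sum>i\<in>UNIV. \<Sum>l\<in>UNIV. B i l * bv i * P l j) = (\<Sum>l\<in>UNIV. v l * P l j)"
    unfolding v_def sum_distrib_right by (subst sum.swap) (simp add: Bs mult_ac)
  have T2: "(\<Sum>i\<in>UNIV. \<Sum>l\<in>UNIV. B i l * P i j * bv l) = (\<Sum>i\<in>UNIV. v i * P i j)"
    unfolding v_def sum_distrib_right sum_distrib_left by (simp add: mult_ac)
  have T3: "(\<Sum>i\<in>UNIV. \<Sum>l\<in>UNIV. dB i l j * bv i * bv l) = - (\<Sum>p\<in>UNIV. \<Sum>q\<in>UNIV. dA p q j * v p * v q)"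
  proof -
    have "(\<Sum>i\<in>UNIV. \<Sum>l\<in>UNIV. dB i l j * bv i * bv l)
        = - (\<Sum>i\<in>UNIV. \<Sum>l\<in>UNIV. \<Sum>p\<in>UNIV. \<Sum>q\<in>UNIV. B i p * dA p q j * B q l * bv i * bv l)"
      by (simp only: dBf sum_distrib_right mult_minus_left sum_negf)
    also have "\<dots> = - (\<Sum>p\<in>UNIV. \<Sum>q\<in>UNIV. \<Sum>i\<in>UNIV. \<Sum>l\<in>UNIV. B i p * dA p q j * B q l * bv i * bv l)"
      by (rule arg_cong[where f=uminus], rule swap4)
    also have "\<dots> = - (\<Sum>p\<in>UNIV. \<Sum>q\<in>UNIV. dA p q j * v p * v q)"
    proof (intro arg_cong[where f=uminus] sum.cong refl)
      fix p q
      have "dA p q j * v p * v q = dA p q j * (v p * v q)" by simp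
      also have "\<dots> = (\<Sum>i\<in>UNIV. \<Sum>l\<in>UNIV. dA p q j * ((B p i * bv i) * (B q l * bv l)))"
        unfolding v_def sum_product by (simp only: sum_distrib_left)
      also have "\<dots> = (\<Sum>i\<in>UNIV. \<Sum>l\<in>UNIV. B i p * dA p q j * B q l * bv i * bv l)"
        by (intro sum.cong refl) (simp add: Bs[of p] mult_ac)
      finally show "(\<Sum>i\<in>UNIV. \<Sum>l\<in>UNIV. B i p * dA p q j * B q l * bv i * bv l) = dA p q j * v p * v q" by simp
    qed
    finally show ?thesis .
  qed
  have G: "\<And>k. (\<Sum>m\<in>UNIV. ((\<Sum>l\<in>UNIV. B m l * (dA j l k + dA k l j - dA k j l)) / 2) * bv m)
      = (\<Sum>l\<in>UNIV. v l * (dA j l k + dA k l j - dA k j l)) / 2"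
    unfolding v_def sum_divide_distrib sum_distrib_right
    by (subst sum.swap) (simp add: Bs mult_ac)
  have Z: "(\<Sum>k\<in>UNIV. \<Sum>l\<in>UNIV. v k * (v l * dA j l k)) = (\<Sum>k\<in>UNIV. \<Sum>l\<in>UNIV. v k * (v l * dA k j l))"
    apply (subst sum.swap) by (simp add: dAs mult_ac)
  have R: "(\<Sum>k\<in>UNIV. v k * (P k j - (\<Sum>l\<in>UNIV. v l * (dA j l k + dA k l j - dA k j l)) / 2))
     = (\<Sum>k\<in>UNIV. v k * P k j) - (\<Sum>k\<in>UNIV. \<Sum>l\<in>UNIV. v k * (v l * dA k l j)) / 2"
  proof -
    have "(\<Sum>k\<in>UNIV. v k * (P k j - (\<Sum>l\<in>UNIV. v l * (dA j l k + dA k l j - dA k j l)) / 2))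
      = (\<Sum>k\<in>UNIV. v k * P k j - (\<Sum>l\<in>UNIV. v k * (v l * (dA j l k + dA k l j - dA k j l))) / 2)"
      by (intro sum.cong refl) (simp add: right_diff_distrib sum_distrib_left)
    also have "\<dots> = (\<Sum>k\<in>UNIV. v k * P k j) - (\<Sum>k\<in>UNIV. \<Sum>l\<in>UNIV. v k * (v l * (dA j l k + dA k l j - dA k j l))) / 2"
      by (simp only: sum_subtractf sum_divide_distrib)
    also have "(\<Sum>k\<in>UNIV. \<Sum>l\<in>UNIV. v k * (v l * (dA j l k + dA k l j - dA k j l)))
       = (\<Sum>k\<in>UNIV. \<Sum>l\<in>UNIV. v k * (v l * dA j l k)) + (\<Sum>k\<in>UNIV. \<Sum>l\<in>UNIV. v k * (v l * dA k l j))
         - (\<Sum>k\<in>UNIV. \<Sum>l\<in>UNIV. v k * (v l * dA k j l))"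
      by (simp add: algebra_simps sum.distrib sum_subtractf)
    finally show ?thesis using Z by simp
  qed
  show ?thesis
    apply (simp only: G R sum.distrib distrib_right)
    using T1 T2 T3 by (simp add: algebra_simps sum.distrib)
qed



lemma partial_has: "(f has_derivative D) (at x) \<Longrightarrow> partial f j x = D (axis j 1)"
  unfolding partial_def by (metis frechet_derivative_at)

lemma has_derivative_cong_open:
  assumes "open S" "x \<in> S" "\<And>y. y \<in> S \<Longrightarrow> f y = g y"
  shows "(f has_derivative D) (at x) \<longleftrightarrow> (g has_derivative D) (at x)"
  using has_derivative_transform_within_open[OF _ assms(1,2), of f D UNIV g]
    has_derivative_transform_within_open[OF _ assms(1,2), of g D UNIV f] assms(3) by auto

lemma partial_cong:
  assumes "open S" "x \<in> S" "\<And>y. y \<in> S \<Longrightarrow> f y = g y"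
  shows "partial f j x = partial g j x"
proof -
  have "frechet_derivative f (at x) = frechet_derivative g (at x)"
    unfolding frechet_derivative_def using has_derivative_cong_open[OF assms] by simp
  then show ?thesis unfolding partial_def by simp
qed

lemma differentiable_cong_open:
  fixes f g :: "real^'n \<Rightarrow> real"
  assumes "open S" "x \<in> S" "\<And>y. y \<in> S \<Longrightarrow> f y = g y" "f differentiable (at x)"
  shows "g differentiable (at x)"
proof -
  obtain D where "(f has_derivative D) (at x)" using assms(4) unfolding differentiable_def by blast
  then have "(g has_derivative D) (at x)" using has_derivative_cong_open[OF assms(1-3), where D=D] by simp
  then show ?thesis unfolding differentiable_def by blast
qed

lemma partial_mult:
  fixes f g :: "real^'n \<Rightarrow> real"
  assumes "f differentiable (at x)" "g differentiable (at x)"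
  shows "partial (\<lambda>y. f y * g y) j x = f x * partial g j x + partial f j x * g x"
proof -
  obtain F G where F: "(f has_derivative F) (at x)" and G: "(g has_derivative G) (at x)"
    using assms by (auto simp: differentiable_def)
  show ?thesis using partial_has[OF has_derivative_mult[OF F G]] partial_has[OF F] partial_has[OF G]
    by simp
qed

lemma partial_sum:
  fixes f :: "'i \<Rightarrow> real^'n \<Rightarrow> real"
  assumes "finite I" "\<And>i. i \<in> I \<Longrightarrow> f i differentiable (at x)"
  shows "partial (\<lambda>y. \<Sum>i\<in>I. f i y) j x = (\<Sum>i\<in>I. partial (f i) j x)"
proof -
  from assms(2) have "\<forall>i\<in>I. \<exists>D. (f i has_derivative D) (at x)" by (auto simp: differentiable_def)
  then obtain D where D: "\<forall>i\<in>I. (f i has_derivative D i) (at x)" by metis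
  have "partial (f i) j x = D i (axis j 1)" if "i \<in> I" for i using D that partial_has by blast
  then show ?thesis using partial_has[OF has_derivative_sum[of I f D, OF D[rule_format]]]
    by simp
qed

lemma partial_const: "partial (\<lambda>y. c) j x = 0"
  unfolding partial_def by (simp add: frechet_derivative_const)

lemma partial_divide:
  fixes f g :: "real^'n \<Rightarrow> real"
  assumes "(f has_derivative F) (at x)" "(g has_derivative G) (at x)" "g x \<noteq> 0"
  shows "partial (\<lambda>y. f y / g y) j x = (F (axis j 1) * g x - f x * G (axis j 1)) / (g x * g x)"
  using partial_has[OF has_derivative_divide'[OF assms]] by simp

lemma inv_sym:
  fixes M N :: "real^'n^'n"
  assumes "transpose M = M" "M ** N = mat 1" "N ** M = mat 1"
  shows "transpose N = N"
proof -
  have "transpose N = transpose N ** (M ** N)" using assms by simp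
  also have "\<dots> = (transpose N ** transpose M) ** N" using assms(1) by (simp add: matrix_mul_assoc)
  also have "\<dots> = transpose (M ** N) ** N" by (simp add: matrix_transpose_mul)
  also have "\<dots> = N" using assms by simp
  finally show ?thesis .
qed

lemma bsq_nonneg:
  fixes M N :: "real^'n^'n" and u :: "real^'n"
  assumes "\<forall>v. v \<noteq> 0 \<longrightarrow> v \<bullet> (M *v v) > 0" "M ** N = mat 1"
  shows "(\<Sum>i\<in>UNIV. \<Sum>j\<in>UNIV. N $ i $ j * u $ i * u $ j) \<ge> 0"
proof -
  define w where "w = N *v u"
  have uw: "u = M *v w" unfolding w_def using assms(2) by (simp add: matrix_vector_mul_assoc)
  have "(\<Sum>i\<in>UNIV. \<Sum>j\<in>UNIV. N $ i $ j * u $ i * u $ j) = u \<bullet> w"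
    unfolding w_def inner_vec_def matrix_vector_mult_def
    by (simp add: sum_distrib_left mult_ac)
  also have "\<dots> = w \<bullet> (M *v w)" using uw by (simp add: inner_commute)
  also have "\<dots> \<ge> 0" using assms(1) by (cases "w = 0") (auto intro: less_imp_le)
  finally show ?thesis .
qed




theorem mainTheorem16:
  fixes U :: "(real^'n) set"
    and A :: "real^'n \<Rightarrow> real^'n^'n"
    and b :: "real^'n \<Rightarrow> real^'n"
    and \<tau> :: "real^'n \<Rightarrow> real"
    and k1 k2 k3 :: real
    and c :: "real \<Rightarrow> real"
  assumes "riemannian_metric_on U A"
    and "one_form_on U b"
    and "\<And>x t. x \<in> U \<Longrightarrow> 0 \<le> t \<Longrightarrow> t \<le> bsq A b x \<Longrightarrow> 1 + (k1 + k3) * t + k2 * t\<^sup>2 > 0"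
    and "\<And>x i j. x \<in> U \<Longrightarrow> covd A b x i j =
           2 * \<tau> x * ((1 + k1 * bsq A b x) * A x $ i $ j + (k2 * bsq A b x + k3) * b x $ i * b x $ j)"
    and "\<And>s. c s = exp (integral {0..s} (\<lambda>t. (1/2) * ((k3 + k2 * t) / (1 + (k1 + k3) * t + k2 * t\<^sup>2))))"
  shows "\<forall>x\<in>U. \<forall>i j.
           covd A (\<lambda>y. b y /\<^sub>R c (bsq A b y)) x i j
             = 2 * \<tau> x * (1 + k1 * bsq A b x) / c (bsq A b x) * A x $ i $ j
         \<and> covd A (\<lambda>y. b y /\<^sub>R c (bsq A b y)) x i j
             = covd A (\<lambda>y. b y /\<^sub>R c (bsq A b y)) x j i"
proof
  fix x assume xU: "x \<in> U"
  from assms(1) have oU: "open U" and Asym: "\<And>y i j. y \<in> U \<Longrightarrow> A y $ i $ j = A y $ j $ i"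
    and Apd: "\<And>y. y \<in> U \<Longrightarrow> \<forall>v. v \<noteq> 0 \<longrightarrow> v \<bullet> (A y *v v) > 0"
    and Adiff: "\<And>i j. (\<lambda>z. A z $ i $ j) differentiable (at x)"
    unfolding riemannian_metric_on_def using xU by auto
  have bdiff: "\<And>i. (\<lambda>z. b z $ i) differentiable (at x)"
    using assms(2) xU unfolding one_form_on_def by auto
  define B where "B y = matrix_inv (A y)" for y
  have AB: "\<And>y. y \<in> U \<Longrightarrow> A y ** B y = mat 1" and BA: "\<And>y. y \<in> U \<Longrightarrow> B y ** A y = mat 1"
    and Ainv: "\<And>y. y \<in> U \<Longrightarrow> invertible (A y)"
    using posdef_inv[OF Apd] unfolding B_def by auto
  have Bsym: "\<And>y i j. y \<in> U \<Longrightarrow> B y $ i $ j = B y $ j $ i"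
  proof -
    fix y i j assume yU: "y \<in> U"
    have "transpose (A y) = A y" using Asym[OF yU] by (simp add: vec_eq_iff transpose_def)
    then have "transpose (B y) = B y" using inv_sym AB[OF yU] BA[OF yU] by blast
    then show "B y $ i $ j = B y $ j $ i" by (metis transpose_def vec_lambda_beta)
  qed
  have Bdiff: "\<And>k l. (\<lambda>y. B y $ k $ l) differentiable (at x)"
  proof -
    fix k l
    let ?M = "\<lambda>y. (\<chi> i j. if j = k then axis l 1 $ i else A y $ i $ j) :: real^'n^'n"
    have "(\<lambda>y. det (?M y)) differentiable (at x)"
    proof (rule det_differentiable)
      fix i j show "(\<lambda>y. ?M y $ i $ j) differentiable (at x)"
        using Adiff by (cases "j = k") auto
    qed
    moreover have "(\<lambda>y. det (A y)) differentiable (at x)" by (rule det_differentiable[OF Adiff])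
    moreover have "det (A x) \<noteq> 0" using Ainv[OF xU] invertible_det_nz by blast
    ultimately have D: "(\<lambda>y. det (?M y) / det (A y)) differentiable (at x)" by simp
    have eq: "\<And>y. y \<in> U \<Longrightarrow> det (?M y) / det (A y) = B y $ k $ l"
      by (simp add: B_def inv_cramer[OF Ainv])
    show "(\<lambda>y. B y $ k $ l) differentiable (at x)"
      by (rule differentiable_cong_open[OF oU xU eq D])
  qed
    define dA where "dA p q k = partial (\<lambda>y. A y $ p $ q) k x" for p q k
  define dB where "dB p q k = partial (\<lambda>y. B y $ p $ q) k x" for p q k
  have dAs: "\<And>p q k. dA p q k = dA q p k"
    unfolding dA_def using Asym by (intro partial_cong[OF oU xU]) auto
  have prodeq: "\<And>i0 l k. (\<Sum>p\<in>UNIV. A x $ i0 $ p * dB p l k + dA i0 p k * B x $ p $ l) = 0"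
  proof -
    fix i0 l k
    have "partial (\<lambda>y. \<Sum>p\<in>UNIV. A y $ i0 $ p * B y $ p $ l) k x = partial (\<lambda>y. mat 1 $ i0 $ l) k x"
      by (rule partial_cong[OF oU xU]) (simp add: AB[symmetric] matrix_matrix_mult_def)
    also have "\<dots> = 0" by (rule partial_const)
    finally show "(\<Sum>p\<in>UNIV. A x $ i0 $ p * dB p l k + dA i0 p k * B x $ p $ l) = 0"
      using Adiff Bdiff unfolding dA_def dB_def
      by (simp add: partial_sum partial_mult)
  qed
  have dBf: "\<And>i l k. dB i l k = - (\<Sum>p\<in>UNIV. \<Sum>q\<in>UNIV. B x $ i $ p * dA p q k * B x $ q $ l)"
  proof -
    fix i l k
    define DB :: "real^'n^'n" where "DB = (\<chi> p q. dB p q k)"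
    define Z :: "real^'n^'n" where "Z = (\<chi> p q. - (\<Sum>r\<in>UNIV. dA p r k * B x $ r $ q))"
    have "A x ** DB = Z"
      unfolding DB_def Z_def matrix_matrix_mult_def using prodeq
      by (simp add: vec_eq_iff sum.distrib eq_neg_iff_add_eq_0)
    then have "DB = B x ** Z" using BA[OF xU] by (metis matrix_mul_assoc matrix_mul_lid)
    then have "dB i l k = (B x ** Z) $ i $ l" unfolding DB_def by (metis vec_lambda_beta)
    also have "\<dots> = - (\<Sum>p\<in>UNIV. \<Sum>q\<in>UNIV. B x $ i $ p * dA p q k * B x $ q $ l)"
      unfolding Z_def matrix_matrix_mult_def
      by (simp add: sum_negf sum_distrib_left mult_ac)
    finally show "dB i l k = - (\<Sum>p\<in>UNIV. \<Sum>q\<in>UNIV. B x $ i $ p * dA p q k * B x $ q $ l)" .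
  qed
  define P where "P i k = partial (\<lambda>y. b y $ i) k x" for i k
  have bsqB: "bsq A b = (\<lambda>y. \<Sum>i\<in>UNIV. \<Sum>l\<in>UNIV. B y $ i $ l * b y $ i * b y $ l)"
    unfolding bsq_def B_def ..
  have bsq_diff: "bsq A b differentiable (at x)"
    unfolding bsqB using Adiff Bdiff bdiff by simp
  have dsq: "partial (bsq A b) k x = (\<Sum>i\<in>UNIV. \<Sum>l\<in>UNIV. B x $ i $ l * b x $ i * P l k
          + (B x $ i $ l * P i k + dB i l k * b x $ i) * b x $ l)" for k
    unfolding bsqB P_def dB_def using Adiff Bdiff bdiff
    by (simp add: partial_sum partial_mult)
  define v where "v k = (\<Sum>i\<in>UNIV. B x $ k $ i * b x $ i)" for k
  define s where "s = bsq A b x"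
  have covd_eq: "covd A b x kk jj = P kk jj - (\<Sum>m\<in>UNIV.
            ((\<Sum>l\<in>UNIV. B x $ m $ l * (dA jj l kk + dA kk l jj - dA kk jj l)) / 2) * b x $ m)" for kk jj
    unfolding covd_def christoffel_def B_def dA_def P_def by simp
  have core: "partial (bsq A b) k x = 2 * (\<Sum>kk\<in>UNIV. v kk * covd A b x kk k)" for k
    unfolding dsq covd_eq v_def
    by (rule alg_core[of "\<lambda>i l. B x $ i $ l" dA dB k "\<lambda>i. b x $ i" P, OF Bsym[OF xU] dAs dBf])
  have vA: "(\<Sum>kk\<in>UNIV. v kk * A x $ kk $ k) = b x $ k" for k
  proof -
    have "(\<Sum>kk\<in>UNIV. v kk * A x $ kk $ k) = (\<Sum>kk\<in>UNIV. \<Sum>i\<in>UNIV. b x $ i * (B x $ i $ kk * A x $ kk $ k))"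
      unfolding v_def sum_distrib_right by (simp add: Bsym[OF xU] mult_ac)
    also have "\<dots> = (\<Sum>i\<in>UNIV. b x $ i * (B x ** A x) $ i $ k)"
      unfolding matrix_matrix_mult_def by (simp add: sum_distrib_left, rule sum.swap)
    also have "\<dots> = b x $ k" using BA[OF xU] by (simp add: mat_def if_distrib cong: if_cong)
    finally show ?thesis .
  qed
  have vb: "(\<Sum>kk\<in>UNIV. v kk * b x $ kk) = s"
    unfolding v_def s_def bsq_def B_def sum_distrib_right by (simp add: mult_ac)
  have vcov: "(\<Sum>kk\<in>UNIV. v kk * covd A b x kk k) = 2 * \<tau> x * ((1 + k1 * s) * b x $ k + (k2 * s + k3) * s * b x $ k)" for k
  proof -
    have "(\<Sum>kk\<in>UNIV. v kk * covd A b x kk k) = (\<Sum>kk\<in>UNIV. 2 * \<tau> x * ((1 + k1 * s) * (v kk * A x $ kk $ k) + (k2 * s + k3) * b x $ k * (v kk * b x $ kk)))"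
      using assms(4)[OF xU] unfolding s_def by (intro sum.cong refl) (simp add: algebra_simps)
    also have "\<dots> = 2 * \<tau> x * ((1 + k1 * s) * (\<Sum>kk\<in>UNIV. v kk * A x $ kk $ k) + (k2 * s + k3) * b x $ k * (\<Sum>kk\<in>UNIV. v kk * b x $ kk))"
      by (simp only: sum_distrib_left[symmetric] sum.distrib)
    also have "\<dots> = 2 * \<tau> x * ((1 + k1 * s) * b x $ k + (k2 * s + k3) * s * b x $ k)"
      using vA vb by (simp add: algebra_simps)
    finally show ?thesis .
  qed
  have dsq_val: "partial (bsq A b) k x = 4 * \<tau> x * b x $ k * (1 + (k1 + k3) * s + k2 * s\<^sup>2)" for k
    using core vcov by (simp add: algebra_simps power2_eq_square)
  have bsq_nn: "bsq A b y \<ge> 0" if yU: "y \<in> U" for y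
    using bsq_nonneg[OF Apd[OF yU] AB[OF yU], of "b y"] unfolding bsq_def B_def .
  define D where "D t = 1 + (k1 + k3) * t + k2 * t\<^sup>2" for t
  define g where "g t = (1/2) * ((k3 + k2 * t) / D t)" for t
  have s0: "0 \<le> s" unfolding s_def using bsq_nn[OF xU] .
  have Ds: "D s > 0" unfolding D_def s_def using assms(3)[OF xU] s0 s_def by simp
  have "isCont D s" unfolding D_def by (intro continuous_intros)
  then have "\<forall>\<^sub>F t in at s. 0 < D t" using order_tendstoD(1)[of D "D s" "at s" 0] Ds
    by (simp add: isCont_def)
  then obtain d where d: "d > 0" "\<And>t. t \<noteq> s \<Longrightarrow> dist t s < d \<Longrightarrow> D t > 0"
    unfolding eventually_at by auto
  define e where "e = d / 2"
  have e0: "e > 0" using d unfolding e_def by simp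
  have Dpos: "D t > 0" if "0 \<le> t" "t \<le> s + e" for t
  proof (cases "t \<le> s")
    case True then show ?thesis unfolding D_def using assms(3)[OF xU] that s_def by simp
  next
    case False then show ?thesis using d that unfolding e_def dist_real_def by auto
  qed
  have gcont: "continuous_on {0..s+e} g"
  proof -
    have Dne: "\<forall>t\<in>{0..s+e}. D t \<noteq> 0" using Dpos by force
    have Dc: "continuous_on {0..s+e} D" unfolding D_def by (intro continuous_intros)
    show ?thesis unfolding g_def
      by (intro continuous_on_mult continuous_on_const continuous_on_divide Dc Dne continuous_intros)
  qed
  have F: "((\<lambda>u. integral {0..u} g) has_real_derivative g s) (at s within {0..s+e})"
    using integral_has_vector_derivative[OF gcont, of s] s0 e0
    by (simp add: has_real_derivative_iff_has_vector_derivative)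
  have cfun: "c = (\<lambda>u. exp (integral {0..u} g))"
    using assms(5) unfolding g_def D_def by (simp add: fun_eq_iff)
  define C where "C = c s"
  have cder: "(c has_real_derivative C * g s) (at s within {0..s+e})"
    unfolding cfun C_def using F by (auto intro!: derivative_eq_intros)
  have Cpos: "C > 0" unfolding C_def cfun by simp
  obtain Dq where Dq: "(bsq A b has_derivative Dq) (at x)" using bsq_diff unfolding differentiable_def by blast
  have "isCont (bsq A b) x" using has_derivative_continuous[OF Dq] .
  then have "\<forall>\<^sub>F y in at x. bsq A b y < s + e" using order_tendstoD(2)[of "bsq A b" "bsq A b x" "at x" "s + e"] e0
    by (simp add: isCont_def s_def)
  then obtain r1 where r1: "r1 > 0" "\<And>y. y \<noteq> x \<Longrightarrow> dist y x < r1 \<Longrightarrow> bsq A b y < s + e"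
    unfolding eventually_at by auto
  obtain r2 where r2: "r2 > 0" "ball x r2 \<subseteq> U" using oU xU open_contains_ball by blast
  define r where "r = min r1 r2"
  have r0: "r > 0" using r1 r2 unfolding r_def by simp
  have img: "bsq A b ` ball x r \<subseteq> {0..s+e}"
  proof
    fix t assume "t \<in> bsq A b ` ball x r"
    then obtain y where y: "y \<in> ball x r" "t = bsq A b y" by auto
    have yU: "y \<in> U" using y r2 unfolding r_def by auto
    have "t \<le> s + e"
    proof (cases "y = x")
      case True then show ?thesis using y e0 s_def by simp
    next
      case False then show ?thesis using r1(2)[of y] y unfolding r_def by (auto simp: dist_commute less_imp_le)
    qed
    then show "t \<in> {0..s+e}" using bsq_nn[OF yU] y by simp
  qed
  have cder': "(c has_derivative (*) (C * g s)) (at (bsq A b x) within bsq A b ` ball x r)"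
    using has_derivative_subset[OF cder[unfolded has_field_derivative_def] img] s_def by simp
  have chain: "((c \<circ> bsq A b) has_derivative ((*) (C * g s) \<circ> Dq)) (at x within ball x r)"
    by (rule diff_chain_within[OF has_derivative_at_withinI[OF Dq] cder'])
  have chain2: "((\<lambda>y. c (bsq A b y)) has_derivative (\<lambda>h. C * g s * Dq h)) (at x)"
    using chain at_within_open[of x "ball x r"] r0 by (simp add: o_def)
  have cx: "c (bsq A b x) = C" by (simp add: C_def s_def)
  have bt: "(\<lambda>y. (b y /\<^sub>R c (bsq A b y)) $ i) = (\<lambda>y. b y $ i / c (bsq A b y))" for i
    by (simp add: fun_eq_iff divide_inverse mult.commute)
  have pbt: "partial (\<lambda>y. (b y /\<^sub>R c (bsq A b y)) $ i) k x
      = (P i k * C - b x $ i * (C * g s * partial (bsq A b) k x)) / (C * C)" for i k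
  proof -
    have Fb: "((\<lambda>y. b y $ i) has_derivative frechet_derivative (\<lambda>y. b y $ i) (at x)) (at x)"
      using bdiff frechet_derivative_works by blast
    show ?thesis unfolding bt
      using partial_divide[OF Fb chain2, of k] cx Cpos partial_has[OF Dq, of k]
      unfolding P_def partial_def by simp
  qed
  have key: "covd A (\<lambda>y. b y /\<^sub>R c (bsq A b y)) x i k = 2 * \<tau> x * (1 + k1 * s) / C * A x $ i $ k" for i k
  proof -
    have "covd A (\<lambda>y. b y /\<^sub>R c (bsq A b y)) x i k
        = (P i k * C - b x $ i * (C * g s * partial (bsq A b) k x)) / (C * C)
          - (\<Sum>m\<in>UNIV. christoffel A x m i k * b x $ m) / C"
      unfolding covd_def pbt cx by (simp add: sum_divide_distrib divide_inverse mult_ac sum_distrib_left)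
    also have "\<dots> = (covd A b x i k - b x $ i * g s * partial (bsq A b) k x) / C"
      unfolding covd_def P_def using Cpos by (simp add: field_simps)
    also have "\<dots> = 2 * \<tau> x * (1 + k1 * s) / C * A x $ i $ k"
    proof -
      have dsq': "partial (bsq A b) k x = 4 * \<tau> x * b x $ k * D s" by (simp add: dsq_val D_def)
      have gsd: "b x $ i * g s * partial (bsq A b) k x = 2 * \<tau> x * b x $ i * b x $ k * (k3 + k2 * s)"
        unfolding dsq' g_def using Ds by (simp add: field_simps)
      have num: "covd A b x i k - b x $ i * g s * partial (bsq A b) k x = 2 * \<tau> x * (1 + k1 * s) * A x $ i $ k"
        unfolding gsd assms(4)[OF xU] s_def[symmetric] by (simp add: algebra_simps)
      show ?thesis unfolding num by simp
    qed
    finally show ?thesis .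
  qed
  show "\<forall>i j. covd A (\<lambda>y. b y /\<^sub>R c (bsq A b y)) x i j
             = 2 * \<tau> x * (1 + k1 * bsq A b x) / c (bsq A b x) * A x $ i $ j
         \<and> covd A (\<lambda>y. b y /\<^sub>R c (bsq A b y)) x i j
             = covd A (\<lambda>y. b y /\<^sub>R c (bsq A b y)) x j i"
    using key Asym[OF xU] cx s_def by simp
qed

end
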